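(* Let $\Gamma\le S_k$, $m\ge1$, let $G,H$ be $(\Gamma,m)$-graphs with labelings $\ell_G,\ell_H$, and let $\sigma=(\sigma_V,\sigma_E)$ be a $(\Gamma,m)$-homomorphism from $G$ to $H$. 1. If $e_1,e_2\in E(G)$ satisfy $e_1^-=e_2^-$, $e_1^+=e_2^+$ and $\ell_H(\sigma_E(e_1))=\ell_H(\sigma_E(e_2))$, then $\ell_G(e_1)=\ell_G(e_2)$. 2. Suppose $G$ is symmetrically labeled (every edge of $G$ has a label of the form $(\lambda,i,\lambda)$), and suppose there is a single $\alpha\in\Gamma$ such that for every edge $e\in E(G)$ and every $a\in\{-,+\}$, $\ell^a_G(e)=\alpha\,\ell^a_H(\sigma_E(e))$. Then the image of $\sigma$ is a symmetrically labeled subgraph of $H$, i.e. every edge $\sigma_E(e)$, $e\in E(G)$, has a label of the form $(\mu,i,\mu)$.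
   Context: A graph $G$ consists of finite sets $V(G)$, $E(G)$ and maps $\iota_G,\tau_G:E(G)\to V(G)$; write $e^-=\iota_G(e)$, $e^+=\tau_G(e)$. $S_k$ is the symmetric group on $[k]=\{1,\dots,k\}$. For $\Gamma\le S_k$, $m\ge1$, a $(\Gamma,m)$-graph is a graph with a labeling $\ell_G:E(G)\to\Gamma\times[m]\times\Gamma$; for $\ell_G(e)=(\gamma^-,j,\gamma^+)$ write $\ell^-_G(e)=\gamma^-$, $\ell^*_G(e)=j$, $\ell^+_G(e)=\gamma^+$. A $(\Gamma,m)$-homomorphism $G\to H$ is a pair $\sigma_V:V(G)\to V(H)$, $\sigma_E:E(G)\to E(H)$ with $\iota_H\sigma_E=\sigma_V\iota_G$, $\tau_H\sigma_E=\sigma_V\tau_G$, $\ell^*_G=\ell^*_H\circ\sigma_E$, and such that for all $e_1,e_2\in E(G)$ and $a,b\in\{-,+\}$ with $e_1^a=e_2^b$: $[\ell^a_G(e_1)]^{-1}\ell^b_G(e_2)=[\ell^a_H(\sigma_E(e_1))]^{-1}\ell^b_H(\sigma_E(e_2))$. *)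

theory Defs
  imports "HOL-Combinatorics.Permutations"
begin

text \<open>Permutations of [k] = {1..k} are represented as functions nat => nat with p permutes {1..k};
  the group product gamma delta is function composition gamma o delta, the inverse is inv.\<close>

type_synonym perm_k = "nat \<Rightarrow> nat"

definition subgroup_Sk :: "nat \<Rightarrow> perm_k set \<Rightarrow> bool" where
  "subgroup_Sk k \<Gamma> \<longleftrightarrow>
     (\<forall>p\<in>\<Gamma>. p permutes {1..k}) \<and> id \<in> \<Gamma> \<and>
     (\<forall>p\<in>\<Gamma>. \<forall>q\<in>\<Gamma>. p \<circ> q \<in> \<Gamma>) \<and> (\<forall>p\<in>\<Gamma>. inv p \<in> \<Gamma>)"

datatype sgn = Minus | Plus

record ('v, 'e) lgraph =
  verts :: "'v set"
  edges :: "'e set"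
  src   :: "'e \<Rightarrow> 'v"
  tgt   :: "'e \<Rightarrow> 'v"
  lab   :: "'e \<Rightarrow> perm_k \<times> nat \<times> perm_k"

definition endpt :: "('v, 'e) lgraph \<Rightarrow> sgn \<Rightarrow> 'e \<Rightarrow> 'v" where
  "endpt G a e = (case a of Minus \<Rightarrow> src G e | Plus \<Rightarrow> tgt G e)"

definition labs :: "('v, 'e) lgraph \<Rightarrow> sgn \<Rightarrow> 'e \<Rightarrow> perm_k" where
  "labs G a e = (case a of Minus \<Rightarrow> fst (lab G e) | Plus \<Rightarrow> snd (snd (lab G e)))"

definition lstar :: "('v, 'e) lgraph \<Rightarrow> 'e \<Rightarrow> nat" where
  "lstar G e = fst (snd (lab G e))"

definition is_graph :: "('v, 'e) lgraph \<Rightarrow> bool" where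
  "is_graph G \<longleftrightarrow> finite (verts G) \<and> finite (edges G) \<and>
     (\<forall>e\<in>edges G. src G e \<in> verts G \<and> tgt G e \<in> verts G)"

definition Gm_graph :: "perm_k set \<Rightarrow> nat \<Rightarrow> ('v, 'e) lgraph \<Rightarrow> bool" where
  "Gm_graph \<Gamma> m G \<longleftrightarrow> is_graph G \<and> (\<forall>e\<in>edges G. lab G e \<in> \<Gamma> \<times> {1..m} \<times> \<Gamma>)"

definition Gm_hom :: "('v, 'e) lgraph \<Rightarrow> ('w, 'f) lgraph \<Rightarrow> ('v \<Rightarrow> 'w) \<Rightarrow> ('e \<Rightarrow> 'f) \<Rightarrow> bool" where
  "Gm_hom G H \<sigma>V \<sigma>E \<longleftrightarrow>
     (\<forall>v\<in>verts G. \<sigma>V v \<in> verts H) \<and> (\<forall>e\<in>edges G. \<sigma>E e \<in> edges H) \<and>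
     (\<forall>e\<in>edges G. src H (\<sigma>E e) = \<sigma>V (src G e) \<and> tgt H (\<sigma>E e) = \<sigma>V (tgt G e)) \<and>
     (\<forall>e\<in>edges G. lstar G e = lstar H (\<sigma>E e)) \<and>
     (\<forall>e1\<in>edges G. \<forall>e2\<in>edges G. \<forall>a b. endpt G a e1 = endpt G b e2 \<longrightarrow>
        inv (labs G a e1) \<circ> labs G b e2 = inv (labs H a (\<sigma>E e1)) \<circ> labs H b (\<sigma>E e2))"

definition sym_labeled_edge :: "('v, 'e) lgraph \<Rightarrow> 'e \<Rightarrow> bool" where
  "sym_labeled_edge G e \<longleftrightarrow> (\<exists>\<mu> i. lab G e = (\<mu>, i, \<mu>))"

end

theory Submission
  imports Defs
begin

theorem mainTheorem2:
  fixes \<Gamma> :: "perm_k set" and k m :: nat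
    and G :: "('v, 'e) lgraph" and H :: "('w, 'f) lgraph"
    and \<sigma>V :: "'v \<Rightarrow> 'w" and \<sigma>E :: "'e \<Rightarrow> 'f"
  assumes "subgroup_Sk k \<Gamma>" and "m \<ge> 1"
    and "Gm_graph \<Gamma> m G" and "Gm_graph \<Gamma> m H"
    and "Gm_hom G H \<sigma>V \<sigma>E"
  shows "(\<forall>e1\<in>edges G. \<forall>e2\<in>edges G.
            src G e1 = src G e2 \<and> tgt G e1 = tgt G e2 \<and> lab H (\<sigma>E e1) = lab H (\<sigma>E e2)
            \<longrightarrow> lab G e1 = lab G e2)
       \<and> ((\<forall>e\<in>edges G. sym_labeled_edge G e) \<and>
          (\<exists>\<alpha>\<in>\<Gamma>. \<forall>e\<in>edges G. \<forall>a. labs G a e = \<alpha> \<circ> labs H a (\<sigma>E e))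
          \<longrightarrow> (\<forall>e\<in>edges G. sym_labeled_edge H (\<sigma>E e)))"

proof -
  have perm: "\<And>p. p \<in> \<Gamma> \<Longrightarrow> bij p" using assms(1) unfolding subgroup_Sk_def
    using permutes_bij by blast
  have labG: "\<And>e a. e \<in> edges G \<Longrightarrow> bij (labs G a e)"
    using assms(3) perm unfolding Gm_graph_def labs_def by (auto split: sgn.splits)
  have labH: "\<And>e a. e \<in> edges G \<Longrightarrow> bij (labs H a (\<sigma>E e))"
  proof -
    fix e a assume "e \<in> edges G"
    hence "\<sigma>E e \<in> edges H" using assms(5) unfolding Gm_hom_def by blast
    thus "bij (labs H a (\<sigma>E e))" using assms(4) perm unfolding Gm_graph_def labs_def
      by (auto split: sgn.splits)
  qed
  have P1: "lab G e1 = lab G e2" if e: "e1 \<in> edges G" "e2 \<in> edges G"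
     and h: "src G e1 = src G e2" "tgt G e1 = tgt G e2" "lab H (\<sigma>E e1) = lab H (\<sigma>E e2)" for e1 e2
  proof -
    have eq: "labs G a e1 = labs G a e2" for a
    proof -
      have ep: "endpt G a e1 = endpt G a e2" using h by (simp add: endpt_def split: sgn.splits)
      have "inv (labs G a e1) \<circ> labs G a e2 = inv (labs H a (\<sigma>E e1)) \<circ> labs H a (\<sigma>E e2)"
        using assms(5) e ep unfolding Gm_hom_def by blast
      also have "\<dots> = id" using h(3) labH[OF e(1), of a] unfolding labs_def
        by (auto simp: bij_is_inj split: sgn.splits)
      finally have "inv (labs G a e1) \<circ> labs G a e2 = id" .
      hence "labs G a e1 \<circ> (inv (labs G a e1) \<circ> labs G a e2) = labs G a e1" by simp
      thus ?thesis using labG[OF e(1), of a]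
      proof -
        have "labs G a e1 \<circ> inv (labs G a e1) = id"
          using labG[OF e(1), of a] bij_is_surj surj_iff by blast
        thus ?thesis using \<open>labs G a e1 \<circ> (inv (labs G a e1) \<circ> labs G a e2) = labs G a e1\<close>
          by (simp add: o_assoc)
      qed
    qed
    have "lstar G e1 = lstar G e2" using assms(5) e h(3) unfolding Gm_hom_def lstar_def by metis
    thus ?thesis using eq[of Minus] eq[of Plus] unfolding labs_def lstar_def
      by (simp add: prod_eq_iff)
  qed
  have P2: "sym_labeled_edge H (\<sigma>E e)" if s: "\<forall>e\<in>edges G. sym_labeled_edge G e"
    and "\<alpha> \<in> \<Gamma>" and al: "\<forall>e\<in>edges G. \<forall>a. labs G a e = \<alpha> \<circ> labs H a (\<sigma>E e)" and e: "e \<in> edges G" for \<alpha> e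
  proof -
    have "labs G Minus e = labs G Plus e" using s e unfolding sym_labeled_edge_def labs_def by auto
    hence "\<alpha> \<circ> labs H Minus (\<sigma>E e) = \<alpha> \<circ> labs H Plus (\<sigma>E e)" using al e by simp
    hence "labs H Minus (\<sigma>E e) = labs H Plus (\<sigma>E e)"
    proof -
      assume eq: "\<alpha> \<circ> labs H Minus (\<sigma>E e) = \<alpha> \<circ> labs H Plus (\<sigma>E e)"
      have ij: "inj \<alpha>" using perm[OF \<open>\<alpha> \<in> \<Gamma>\<close>] bij_is_inj by blast
      show ?thesis
      proof (rule ext)
        fix x
        have "\<alpha> (labs H Minus (\<sigma>E e) x) = \<alpha> (labs H Plus (\<sigma>E e) x)"
          using fun_cong[OF eq, of x] by simp
        thus "labs H Minus (\<sigma>E e) x = labs H Plus (\<sigma>E e) x" using ij by (simp add: inj_eq)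
      qed
    qed
    thus ?thesis unfolding sym_labeled_edge_def labs_def
      by (cases "lab H (\<sigma>E e)") auto
  qed
  show ?thesis using P1 P2 by blast
qed

end
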